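(* Fix $n\in\mathbb N$. For integers $k$ with $1\le |k|\le n$ let $$p_{nk}=\frac{(-1)^{k+1}(n!)^2}{k\,(n+k)!\,(n-k)!},$$ and let $p_{n0}=0$. (Equivalently, $p_{nk}=\pi_{nk}'(0)$ for $|k|\le n$, where $\pi_{nk}$ is the Lagrange basis polynomial of degree $2n$ for the nodes $-n,\dots,n$, i.e. the unique polynomial of degree $2n$ with $\pi_{nk}(j)=\delta_{kj}$ for all integers $|j|\le n$.) Then: (i) the sequence $\bigl((-1)^{k+1}p_{nk}\bigr)_{1\le k\le n}$ is positive and monotone decreasing, and $p_{n,-k}=-p_{nk}$ for $1\le k\le n$; (ii) for integers $0\le j\le 2n$ (with the convention $0^0=1$), $$\sum_{k=-n}^n p_{nk}k^j=\begin{cases}1,& j=1,\\ 0,& j=0\text{ or }2\le j\le 2n;\end{cases}$$ (iii) $\displaystyle\sum_{k=1}^n|p_{nk}|=\frac{H_n}{2}$ and $\displaystyle\sum_{k=1}^n p_{nk}=H_{2n}-H_n$, where $H_n=\sum_{k=1}^n k^{-1}$ is the $n$-th harmonic number. *)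

theory Defs
  imports "HOL-Analysis.Analysis"
begin

text \<open>The coefficients p_{nk} for integers k with |k| \<le> n (p_{n0} = 0).
  For |k| > n the value is irrelevant; we set it to 0.\<close>
definition p :: "nat \<Rightarrow> int \<Rightarrow> real" where
  "p n k = (if k = 0 \<or> \<bar>k\<bar> > int n then 0
            else (-1) ^ nat \<bar>k + 1\<bar> * (fact n)^2 /
                 (real_of_int k * fact (nat (int n + k)) * fact (nat (int n - k))))"

end

theory Submission
  imports Defs
begin

lemma pascal_alt:
  fixes f :: "nat \<Rightarrow> real"
  shows "(\<Sum>i\<le>Suc N. (-1)^i * real (Suc N choose i) * f i)
       = (\<Sum>i\<le>N. (-1)^i * real (N choose i) * (f i - f (Suc i)))"
proof -
  have e1: "(\<Sum>i\<le>Suc N. (-1)^i * real (Suc N choose i) * f i)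
      = f 0 + (\<Sum>i\<le>N. (-1)^(Suc i) * real (N choose i) * f (Suc i))
      + (\<Sum>i\<le>N. (-1)^(Suc i) * real (N choose Suc i) * f (Suc i))"
    by (subst sum.atMost_Suc_shift) (simp add: sum.distrib[symmetric] algebra_simps)
  have e2: "f 0 + (\<Sum>i\<le>N. (-1)^(Suc i) * real (N choose Suc i) * f (Suc i))
      = (\<Sum>i\<le>Suc N. (-1)^i * real (N choose i) * f i)"
    by (subst sum.atMost_Suc_shift) simp
  have e3: "(\<Sum>i\<le>Suc N. (-1)^i * real (N choose i) * f i) = (\<Sum>i\<le>N. (-1)^i * real (N choose i) * f i)"
    by simp
  show ?thesis
    unfolding e1 using e2 e3
    by (simp add: right_diff_distrib sum_subtractf sum_negf binomial_eq_0 mult_ac)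
qed

lemma fin_diff:
  "m < N \<Longrightarrow> (\<Sum>i\<le>N. (-1)^i * real (N choose i) * (x + real i)^m) = 0"
proof (induction N arbitrary: m x)
  case 0 then show ?case by simp
next
  case (Suc N)
  have d: "(x + real i)^m - (x + real (Suc i))^m = - (\<Sum>l<m. real (m choose l) * (x + real i)^l)" for i
  proof -
    have "(x + real (Suc i))^m = ((x + real i) + 1)^m" by (simp add: algebra_simps)
    also have "\<dots> = (\<Sum>l\<le>m. real (m choose l) * (x + real i)^l)"
      by (subst binomial_ring) (simp add: mult.commute)
    also have "\<dots> = (\<Sum>l<m. real (m choose l) * (x + real i)^l) + (x + real i)^m"
      by (simp add: lessThan_Suc_atMost[symmetric])
    finally show ?thesis by simp
  qed
  have "(\<Sum>i\<le>Suc N. (-1)^i * real (Suc N choose i) * (x + real i)^m)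
      = (\<Sum>i\<le>N. (-1)^i * real (N choose i) * ((x + real i)^m - (x + real (Suc i))^m))"
    by (rule pascal_alt)
  also have "\<dots> = - (\<Sum>i\<le>N. \<Sum>l<m. real (m choose l) * ((-1)^i * real (N choose i) * (x + real i)^l))"
    by (simp only: d sum_distrib_left sum_negf[symmetric]) (simp add: algebra_simps)
  also have "\<dots> = - (\<Sum>l<m. real (m choose l) * (\<Sum>i\<le>N. (-1)^i * real (N choose i) * (x + real i)^l))"
    by (subst sum.swap) (simp add: sum_distrib_left)
  also have "\<dots> = 0"
  proof -
    have "\<forall>l\<in>{..<m}. real (m choose l) * (\<Sum>i\<le>N. (-1)^i * real (N choose i) * (x + real i)^l) = 0"
      using Suc by auto
    then show ?thesis by simp
  qed
  finally show ?case .
qed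

definition aa :: "nat \<Rightarrow> nat \<Rightarrow> real" where
  "aa n k = fact n ^ 2 / (fact (n + k) * fact (n - k))"

lemma aa_0: "aa n 0 = 1"
  by (simp add: aa_def power2_eq_square)

lemma aa_pos: "aa n k > 0"
  by (simp add: aa_def)

lemma aa_ratio:
  assumes "m < N"
  shows "aa N (Suc m) * (real N + real m + 1) = (real N - real m) * aa N m"
proof -
  have f1: "fact (N + Suc m) = (real N + real m + 1) * (fact (N + m) :: real)"
    by (simp add: algebra_simps)
  have "N - m = Suc (N - Suc m)" using assms by simp
  then have f2: "(fact (N - m) :: real) = (real N - real m) * fact (N - Suc m)"
    using assms by (simp add: of_nat_diff)
  have p: "real N - real m > 0" using assms by simp
  have g: "F / (x * A * B) * x = y * (F / (A * (y * B)))" if "x > 0" "y > 0" "A > 0" "B > 0" for F x y A B :: real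
    using that by (simp add: field_simps)
  show ?thesis
    unfolding aa_def f1 f2 using p
    by (intro g) auto
qed

lemma aa_step:
  assumes "k \<le> n"
  shows "aa (Suc n) k * ((real n + 1)^2 - (real k)^2) = (real n + 1)^2 * aa n k"
proof -
  have f0: "(fact (Suc n) :: real) = (real n + 1) * fact n" by (simp add: algebra_simps)
  have f1: "(fact (Suc n + k) :: real) = (real n + real k + 1) * fact (n + k)"
    by (simp add: algebra_simps)
  have "Suc n - k = Suc (n - k)" using assms by simp
  then have f2: "(fact (Suc n - k) :: real) = (real n - real k + 1) * fact (n - k)"
    using assms by (simp add: of_nat_diff algebra_simps)
  have p: "real n - real k + 1 > 0" using assms by simp
  have e: "(real n + 1)^2 - (real k)^2 = (real n + real k + 1) * (real n - real k + 1)"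
    by (simp add: power2_eq_square algebra_simps)
  have g: "(x * F) ^ 2 / (y * A * (z * B)) * (y * z) = x ^ 2 * (F ^ 2 / (A * B))" if "y > 0" "z > 0" "A > 0" "B > 0" for F x y z A B :: real
    using that by (simp add: field_simps power2_eq_square)
  show ?thesis
    unfolding aa_def f0 f1 f2 e using p
    by (intro g) auto
qed

lemma sumA:
  assumes "m \<le> N"
  shows "(\<Sum>k=1..m. real k * aa N k) = real N / 2 - (real N - real m) * aa N m / 2"
  using assms
proof (induction m)
  case 0 then show ?case by (simp add: aa_0)
next
  case (Suc m)
  have r: "aa N (Suc m) * (real N + real m + 1) = (real N - real m) * aa N m"
    using Suc by (intro aa_ratio) simp
  have "(\<Sum>k=1..Suc m. real k * aa N k) = (\<Sum>k=1..m. real k * aa N k) + real (Suc m) * aa N (Suc m)"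
    by simp
  also have "\<dots> = real N / 2 - (real N - real m) * aa N m / 2 + real (Suc m) * aa N (Suc m)"
    using Suc by simp
  also have "\<dots> = real N / 2 - (real N - real (Suc m)) * aa N (Suc m) / 2"
    using r by (simp add: field_simps)
  finally show ?case .
qed

lemma sumB:
  assumes "m \<le> N" "N \<ge> 1"
  shows "(\<Sum>k=1..m. (-1)^(k+1) * real k * aa N k)
     = real N / (2 * (2 * real N - 1)) - (-1)^m * (2 * real m + 1) * (real N - real m) * aa N m / (2 * (2 * real N - 1))"
  using assms
proof (induction m)
  case 0 then show ?case by (simp add: aa_0)
next
  case (Suc m)
  have r: "aa N (Suc m) * (real N + real m + 1) = (real N - real m) * aa N m"
    using Suc by (intro aa_ratio) simp
  have D: "2 * real N - 1 > 0" using Suc by simp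
  have "(\<Sum>k=1..Suc m. (-1)^(k+1) * real k * aa N k) = (\<Sum>k=1..m. (-1)^(k+1) * real k * aa N k) + (-1)^m * real (Suc m) * aa N (Suc m)"
    by simp
  also have "\<dots> = real N / (2 * (2 * real N - 1)) - (-1)^m * (2 * real m + 1) * (real N - real m) * aa N m / (2 * (2 * real N - 1)) + (-1)^m * real (Suc m) * aa N (Suc m)"
    using Suc by simp
  also have "\<dots> = real N / (2 * (2 * real N - 1)) - (-1)^(Suc m) * (2 * real (Suc m) + 1) * (real N - real (Suc m)) * aa N (Suc m) / (2 * (2 * real N - 1))"
  proof -
    have h: "(-1)^m * (2 * real m + 1) * (real N - real m) * aa N m = (-1)^m * (2 * real m + 1) * (aa N (Suc m) * (real N + real m + 1))"
      using r by (simp add: mult.assoc)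
    have g: "n / (2 * d) - s * (2 * m + 1) * (b * (n + m + 1)) / (2 * d) + s * (m + 1) * b
       = n / (2 * d) - (- s) * (2 * (m + 1) + 1) * (n - (m + 1)) * b / (2 * d)"
      if "d = 2 * n - 1" "d > 0" for n m d s b :: real
    proof -
      have k: "- s * (2 * m + 1) * (b * (n + m + 1)) + s * (m + 1) * b * (2 * d) - s * (2 * (m + 1) + 1) * (n - (m + 1)) * b = 0"
        unfolding that(1) by (simp add: algebra_simps)
      have "(n / (2 * d) - s * (2 * m + 1) * (b * (n + m + 1)) / (2 * d) + s * (m + 1) * b)
       - (n / (2 * d) - (- s) * (2 * (m + 1) + 1) * (n - (m + 1)) * b / (2 * d))
       = (- s * (2 * m + 1) * (b * (n + m + 1)) + s * (m + 1) * b * (2 * d) - s * (2 * (m + 1) + 1) * (n - (m + 1)) * b) / (2 * d)"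
        using that(2) by (simp add: field_simps)
      then show ?thesis using k by simp
    qed
    show ?thesis unfolding h using D g[where n="real N" and m="real m" and d="2 * real N - 1" and s="(-1)^m" and b="aa N (Suc m)"] by (simp add: add.commute)
  qed
  finally show ?case .
qed


lemma gen1: "M > 0 \<Longrightarrow> k > 0 \<Longrightarrow> b * (M^2 - k^2) = M^2 * a \<Longrightarrow> b / k = a / k + k * b / M^2"
  for M k a b :: real
proof -
  assume h: "M > 0" "k > 0" "b * (M^2 - k^2) = M^2 * a"
  then have "a = b * (M^2 - k^2) / M^2" by (simp add: field_simps)
  then show ?thesis using h by (simp add: field_simps power2_eq_square)
qed

lemma g3: "(y::real) \<ge> 0 \<Longrightarrow> (y + 1) / (2 * (2 * (y + 1) - 1)) / (y + 1)^2 = 1 / (2 * y + 1) + 1 / (2 * y + 2) - inverse (y + 1)"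
proof -
  assume "y \<ge> 0"
  define u where "u = y + 1"
  define w where "w = 2 * y + 1"
  have a: "u > 0" "w > 0" using \<open>y \<ge> 0\<close> by (auto simp: u_def w_def)
  have e1: "(y + 1) / (2 * (2 * (y + 1) - 1)) / (y + 1)^2 = u / (2 * w) / u^2"
    by (simp add: u_def w_def)
  have e2: "1 / (2 * y + 1) + 1 / (2 * y + 2) - inverse (y + 1) = 1 / w + 1 / (2 * u) - inverse u"
    by (simp add: u_def w_def)
  have c: "1 / w + 1 / (2 * u) - inverse u = (2 * u - w) / (2 * w * u)"
    using a by (simp add: field_simps)
  have d: "2 * u - w = 1" by (simp add: u_def w_def)
  have f: "u / (2 * w) / u^2 = 1 / (2 * w * u)" using a by (simp add: field_simps power2_eq_square)
  show ?thesis unfolding e1 e2 c d f ..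
qed

lemma g4: "(x::real) > 0 \<Longrightarrow> x / 2 / x^2 = inverse x / 2"
  by (simp add: field_simps power2_eq_square)

lemma gen2: "x > 0 \<Longrightarrow> c * a / x = c * x * a / x^2" for x c a :: real
  by (simp add: power2_eq_square)

lemma aa_term:
  assumes "1 \<le> k" "k \<le> n"
  shows "aa (Suc n) k / real k = aa n k / real k + real k * aa (Suc n) k / (real n + 1)^2"
  using assms by (intro gen1 aa_step) auto

lemma aa_term':
  assumes "1 \<le> k" "k \<le> n"
  shows "(-1)^(k+1) * aa (Suc n) k / real k = (-1)^(k+1) * aa n k / real k + (-1)^(k+1) * real k * aa (Suc n) k / (real n + 1)^2"
  using arg_cong[OF aa_term[OF assms], of "\<lambda>x. (-1)^(k+1) * x"] by (simp only: distrib_left times_divide_eq_right mult.assoc)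

lemma split_top:
  fixes g :: "nat \<Rightarrow> nat \<Rightarrow> real"
  assumes "\<And>k. 1 \<le> k \<Longrightarrow> k \<le> n \<Longrightarrow> g (Suc n) k = g n k + h k"
  shows "(\<Sum>k=1..Suc n. g (Suc n) k) = (\<Sum>k=1..n. g n k) + (\<Sum>k=1..n. h k) + g (Suc n) (Suc n)"
proof -
  have "(\<Sum>k=1..n. g (Suc n) k) = (\<Sum>k=1..n. g n k + h k)"
    using assms by (intro sum.cong) auto
  then show ?thesis by (simp add: sum.distrib)
qed

lemma harmA: "(\<Sum>k=1..n. aa n k / real k) = harm n / 2"
proof (induction n)
  case 0 then show ?case by (simp add: harm_def)
next
  case (Suc n)
  let ?N = "real n + 1"
  have N: "real (Suc n) = ?N" by simp
  have "(\<Sum>k=1..Suc n. aa (Suc n) k / real k) = (\<Sum>k=1..n. aa n k / real k)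
      + ((\<Sum>k=1..n. real k * aa (Suc n) k / ?N^2) + aa (Suc n) (Suc n) / real (Suc n))"
    by (subst add.assoc[symmetric], rule split_top[where g="\<lambda>n k. aa n k / real k"]) (rule aa_term)
  also have "aa (Suc n) (Suc n) / real (Suc n) = real (Suc n) * aa (Suc n) (Suc n) / ?N^2"
    using gen2[of ?N 1 "aa (Suc n) (Suc n)"] unfolding N by simp
  also have "(\<Sum>k=1..n. real k * aa (Suc n) k / ?N^2) + real (Suc n) * aa (Suc n) (Suc n) / ?N^2
     = (\<Sum>k=1..Suc n. real k * aa (Suc n) k) / ?N^2"
    by (simp add: sum_divide_distrib add_divide_distrib)
  also have "(\<Sum>k=1..Suc n. real k * aa (Suc n) k) = ?N / 2"
    using sumA[of "Suc n" "Suc n"] by simp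
  also have "?N / 2 / ?N^2 = inverse ?N / 2"
    by (rule g4) simp
  finally have X: "(\<Sum>k=1..Suc n. aa (Suc n) k / real k) = (\<Sum>k=1..n. aa n k / real k) + inverse ?N / 2" .
  show ?case using Suc.IH X by (simp add: harm_Suc add_divide_distrib add_ac)
qed

lemma harmB: "(\<Sum>k=1..n. (-1)^(k+1) * aa n k / real k) = harm (2*n) - harm n"
proof (induction n)
  case 0 then show ?case by (simp add: harm_def)
next
  case (Suc n)
  let ?N = "real n + 1"
  have N: "real (Suc n) = ?N" by simp
  have "(\<Sum>k=1..Suc n. (-1)^(k+1) * aa (Suc n) k / real k) = (\<Sum>k=1..n. (-1)^(k+1) * aa n k / real k)
      + ((\<Sum>k=1..n. (-1)^(k+1) * real k * aa (Suc n) k / ?N^2) + (-1)^(Suc n+1) * aa (Suc n) (Suc n) / real (Suc n))"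
    by (subst add.assoc[symmetric], rule split_top[where g="\<lambda>n k. (-1)^(k+1) * aa n k / real k"]) (rule aa_term')
  also have "(-1)^(Suc n+1) * aa (Suc n) (Suc n) / real (Suc n) = (-1)^(Suc n+1) * real (Suc n) * aa (Suc n) (Suc n) / ?N^2"
    using gen2[of ?N "(-1)^(Suc n+1)" "aa (Suc n) (Suc n)"] unfolding N by simp
  also have "(\<Sum>k=1..n. (-1)^(k+1) * real k * aa (Suc n) k / ?N^2) + (-1)^(Suc n+1) * real (Suc n) * aa (Suc n) (Suc n) / ?N^2
     = (\<Sum>k=1..Suc n. (-1)^(k+1) * real k * aa (Suc n) k) / ?N^2"
    by (simp add: sum_divide_distrib add_divide_distrib)
  also have "(\<Sum>k=1..Suc n. (-1)^(k+1) * real k * aa (Suc n) k) = ?N / (2 * (2 * ?N - 1))"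
    using sumB[of "Suc n" "Suc n"] by simp
  also have "?N / (2 * (2 * ?N - 1)) / ?N^2 = 1 / (2 * real n + 1) + 1 / (2 * real n + 2) - inverse ?N"
    by (rule g3) simp
  finally have X: "(\<Sum>k=1..Suc n. (-1)^(k+1) * aa (Suc n) k / real k) = (\<Sum>k=1..n. (-1)^(k+1) * aa n k / real k) + (1 / (2 * real n + 1) + 1 / (2 * real n + 2) - inverse ?N)" .
  have hh: "harm (2 * Suc n) = (harm (2 * n) :: real) + 1 / (2 * real n + 1) + 1 / (2 * real n + 2)"
    by (simp add: harm_Suc field_simps)
  show ?case using Suc.IH X hh by (simp add: harm_Suc add_ac)
qed


lemma sign_int: "(-1::real) ^ nat \<bar>z\<bar> = (if even z then 1 else -1)"
proof (cases "z \<ge> 0")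
  case True
  then obtain m where "z = int m" by (metis nonneg_eq_int)
  then show ?thesis by (simp add: minus_one_power_iff)
next
  case False
  then obtain m where "z = - int m" by (metis neg_int_cases not_le le_less)
  then show ?thesis by (simp add: minus_one_power_iff)
qed

lemma p_nat:
  assumes "1 \<le> k" "k \<le> n"
  shows "p n (int k) = (-1)^(k+1) * aa n k / real k"
proof -
  have s: "nat \<bar>int k + 1\<bar> = k + 1" by simp
  have f1: "nat (int n + int k) = n + k" by simp
  have f2: "nat (int n - int k) = n - k" using assms by simp
  have c: "\<not> (int k = 0 \<or> \<bar>int k\<bar> > int n)" using assms by simp
  show ?thesis
    unfolding p_def aa_def using c
    by (simp only: s f1 f2 if_False) (simp add: field_simps)
qed

lemma p_neg_nat:
  assumes "1 \<le> k" "k \<le> n"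
  shows "p n (- int k) = - p n (int k)"
proof -
  have s: "(-1::real) ^ nat \<bar>- int k + 1\<bar> = (-1) ^ nat \<bar>int k + 1\<bar>"
    unfolding sign_int by simp
  have f1: "nat (int n + - int k) = nat (int n - int k)" by simp
  have f2: "nat (int n - - int k) = nat (int n + int k)" by simp
  have c: "\<not> (int k = 0 \<or> \<bar>int k\<bar> > int n)" "\<not> (- int k = 0 \<or> \<bar>- int k\<bar> > int n)" using assms by auto
  show ?thesis
    unfolding p_def using c
    by (simp only: s f1 f2 if_False) (simp add: field_simps)
qed

lemma p_odd: "p n (- k) = - p n k"
proof -
  consider "k = 0" | "\<bar>k\<bar> > int n" | "1 \<le> k" "k \<le> int n" | "1 \<le> -k" "-k \<le> int n" by linarith
  then show ?thesis
  proof cases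
    case 1 then show ?thesis by (simp add: p_def)
  next
    case 2 then show ?thesis by (simp add: p_def)
  next
    case 3
    then obtain m where m: "k = int m" "1 \<le> m" "m \<le> n" by (metis nonneg_eq_int of_nat_le_iff of_nat_1 order_trans zero_le_one)
    then show ?thesis using p_neg_nat by simp
  next
    case 4
    then obtain m where m: "-k = int m" "1 \<le> m" "m \<le> n" by (metis nonneg_eq_int of_nat_le_iff of_nat_1 order_trans zero_le_one)
    then have "k = - int m" by simp
    then show ?thesis using p_neg_nat[OF m(2,3)] by simp
  qed
qed

lemma p_shift:
  assumes "i \<le> 2 * n" "i \<noteq> n"
  shows "p n (int i - int n) = (-1)^(i+n+1) * (real (2*n choose i) / real (2*n choose n)) / (real i - real n)"
proof -
  have s: "(-1::real) ^ nat \<bar>int i - int n + 1\<bar> = (-1)^(i+n+1)"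
  proof -
    have "even (int i - int n + 1) \<longleftrightarrow> even (i + n + 1)"
      by presburger
    then show ?thesis unfolding sign_int by (simp add: minus_one_power_iff)
  qed
  have f1: "nat (int n + (int i - int n)) = i" by simp
  have f2: "nat (int n - (int i - int n)) = 2 * n - i" using assms by simp
  have r: "real_of_int (int i - int n) = real i - real n" by simp
  have c: "\<not> (int i - int n = 0 \<or> \<bar>int i - int n\<bar> > int n)" using assms by auto
  have b1: "real (2*n choose i) = fact (2*n) / (fact i * fact (2*n - i))"
    using assms by (intro binomial_fact) simp
  have b2: "real (2*n choose n) = fact (2*n) / (fact n * fact n)"
    using binomial_fact[of n "2*n", where 'a=real] by (simp add: mult_2)
  have g: "x * F ^ 2 / (d * A * B) = x * (C / (A * B) / (C / (F * F))) / d"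
    if "F > 0" "A > 0" "B > 0" "C > 0" for x F A B C d :: real
    using that by (simp add: field_simps power2_eq_square)
  show ?thesis
    unfolding p_def using c
    apply (simp only: s f1 f2 r if_False b1 b2)
    by (rule g) auto
qed


lemma moment0: "(\<Sum>k = -int n..int n. p n k) = 0"
proof -
  have im: "uminus ` {-int n..int n} = {-int n..int n}"
    by (auto simp: image_iff intro!: bexI[where x="- _"])
  have "(\<Sum>k = -int n..int n. p n k) = (\<Sum>k \<in> uminus ` {-int n..int n}. p n k)"
    unfolding im ..
  also have "\<dots> = (\<Sum>k = -int n..int n. p n (- k))"
    by (subst sum.reindex) (auto simp: inj_on_def)
  also have "\<dots> = - (\<Sum>k = -int n..int n. p n k)"
    by (simp add: p_odd sum_negf)
  finally show ?thesis by simp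
qed

lemma reindex_sym:
  "(\<Sum>k = -int n..int n. f k) = (\<Sum>i = 0..2*n. f (int i - int n))"
  by (rule sum.reindex_bij_witness[where i="\<lambda>i. int i - int n" and j="\<lambda>k. nat (k + int n)"]) auto

lemma moment:
  assumes "1 \<le> j" "j \<le> 2 * n"
  shows "(\<Sum>k = -int n..int n. p n k * (real_of_int k)^j) = (if j = 1 then 1 else 0)"
proof -
  define c where "c = (-1::real)^(n+1) / real (2*n choose n)"
  have T: "p n (int i - int n) * (real_of_int (int i - int n))^j
      = c * ((-1)^i * real (2*n choose i) * (- real n + real i)^(j-1)) + (if j = 1 then (if i = n then 1 else 0) else 0)"
    if "i \<le> 2 * n" for i
  proof (cases "i = n")
    case True
    then show ?thesis using assms by (simp add: p_def c_def)
  next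
    case False
    have nz: "real i - real n \<noteq> 0" using False by simp
    have pw: "(real i - real n)^j = (real i - real n) * (real i - real n)^(j-1)"
      using assms by (metis Suc_diff_1 less_le_trans zero_less_one power_Suc)
    have "p n (int i - int n) * (real_of_int (int i - int n))^j
       = (-1)^(i+n+1) * (real (2*n choose i) / real (2*n choose n)) / (real i - real n) * ((real i - real n) * (real i - real n)^(j-1))"
      using p_shift[OF that False] pw by simp
    also have "\<dots> = c * ((-1)^i * real (2*n choose i) * (- real n + real i)^(j-1))"
      using nz unfolding c_def by (simp add: power_add field_simps)
    finally show ?thesis using False by simp
  qed
  have "(\<Sum>k = -int n..int n. p n k * (real_of_int k)^j)
      = (\<Sum>i = 0..2*n. c * ((-1)^i * real (2*n choose i) * (- real n + real i)^(j-1)) + (if j = 1 then (if i = n then 1 else 0) else 0))"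
    unfolding reindex_sym using T by (intro sum.cong) auto
  also have "\<dots> = c * (\<Sum>i\<le>2*n. (-1)^i * real (2*n choose i) * (- real n + real i)^(j-1)) + (if j = 1 then 1 else 0)"
    by (simp add: sum.distrib sum_distrib_left atLeast0AtMost)
  also have "(\<Sum>i\<le>2*n. (-1)^i * real (2*n choose i) * (- real n + real i)^(j-1)) = 0"
    using assms by (intro fin_diff) simp
  finally show ?thesis by simp
qed


lemma int_range_nat: "1 \<le> k \<Longrightarrow> k \<le> int n \<Longrightarrow> \<exists>m. k = int m \<and> 1 \<le> m \<and> m \<le> n"
  by (rule exI[where x="nat k"]) auto

lemma sum_int_nat: "(\<Sum>k = 1..int n. f k) = (\<Sum>k = 1..n. f (int k))"
proof -
  have "{1..int n} = int ` {1..n}" by (simp add: image_int_atLeastAtMost)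
  then show ?thesis by (simp add: sum.reindex)
qed

theorem mainTheorem1:
  fixes n :: nat
  shows "(\<forall>k::int. 1 \<le> k \<and> k \<le> int n \<longrightarrow> (-1) ^ nat (k + 1) * p n k > 0)
       \<and> (\<forall>k::int. 1 \<le> k \<and> k < int n \<longrightarrow>
              (-1) ^ nat (k + 2) * p n (k + 1) \<le> (-1) ^ nat (k + 1) * p n k)
       \<and> (\<forall>k::int. 1 \<le> k \<and> k \<le> int n \<longrightarrow> p n (-k) = - p n k)
       \<and> (\<forall>j::nat. j \<le> 2 * n \<longrightarrow>
              (\<Sum>k = -int n..int n. p n k * (real_of_int k) ^ j) = (if j = 1 then 1 else 0))
       \<and> (\<Sum>k = 1..int n. \<bar>p n k\<bar>) = harm n / 2
       \<and> (\<Sum>k = 1..int n. p n k) = harm (2 * n) - harm n"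
proof (intro conjI allI impI)
  have sgn: "(-1::real) ^ nat (int m + 1) * p n (int m) = aa n m / real m" if "1 \<le> m" "m \<le> n" for m
  proof -
    have "nat (int m + 1) = m + 1" by simp
    then show ?thesis using p_nat[OF that] by (simp add: power_add)
  qed
  fix k :: int
  {
    assume "1 \<le> k \<and> k \<le> int n"
    then obtain m where m: "k = int m" "1 \<le> m" "m \<le> n" using int_range_nat by blast
    show "(-1) ^ nat (k + 1) * p n k > 0" using sgn[OF m(2,3)] m aa_pos[of n m] by simp
  }
  {
    assume "1 \<le> k \<and> k < int n"
    then obtain m where m: "k = int m" "1 \<le> m" "m < n" using int_range_nat[of k n] by auto
    have e2: "(-1::real) ^ nat (k + 2) * p n (k + 1) = aa n (Suc m) / real (Suc m)"
      using sgn[of "Suc m"] m by (simp add: add.commute)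
    have e1: "(-1::real) ^ nat (k + 1) * p n k = aa n m / real m"
      using sgn[of m] m by simp
    have r: "aa n (Suc m) * (real n + real m + 1) = (real n - real m) * aa n m"
      using m by (intro aa_ratio) simp
    have "aa n (Suc m) \<le> aa n m"
    proof -
      have "aa n (Suc m) * (real n + real m + 1) \<le> aa n m * (real n + real m + 1)"
        using r aa_pos[of n m] by (simp add: mult.commute mult_left_mono)
      then show ?thesis by (simp add: mult_le_cancel_right)
    qed
    moreover have "aa n (Suc m) / real (Suc m) \<le> aa n (Suc m) / real m"
      using m aa_pos[of n "Suc m"] by (intro divide_left_mono) auto
    ultimately have "aa n (Suc m) / real (Suc m) \<le> aa n m / real m"
      using m by (meson divide_right_mono of_nat_0_le_iff order_trans)
    then show "(-1) ^ nat (k + 2) * p n (k + 1) \<le> (-1) ^ nat (k + 1) * p n k"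
      using e1 e2 by simp
  }
  {
    assume "1 \<le> k \<and> k \<le> int n"
    show "p n (-k) = - p n k" by (rule p_odd)
  }
next
  fix j :: nat
  assume j: "j \<le> 2 * n"
  show "(\<Sum>k = -int n..int n. p n k * (real_of_int k) ^ j) = (if j = 1 then 1 else 0)"
  proof (cases "j = 0")
    case True then show ?thesis using moment0 by simp
  next
    case False then show ?thesis using moment[of j n] j by simp
  qed
next
  have "(\<Sum>k = 1..int n. \<bar>p n k\<bar>) = (\<Sum>k = 1..n. \<bar>p n (int k)\<bar>)" by (rule sum_int_nat)
  also have "\<dots> = (\<Sum>k = 1..n. aa n k / real k)"
    by (intro sum.cong) (auto simp: p_nat abs_mult abs_divide aa_pos less_imp_le)
  also have "\<dots> = harm n / 2" by (rule harmA)
  finally show "(\<Sum>k = 1..int n. \<bar>p n k\<bar>) = harm n / 2" .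
next
  have "(\<Sum>k = 1..int n. p n k) = (\<Sum>k = 1..n. p n (int k))" by (rule sum_int_nat)
  also have "\<dots> = (\<Sum>k = 1..n. (-1)^(k+1) * aa n k / real k)"
    by (intro sum.cong) (auto simp: p_nat)
  also have "\<dots> = harm (2*n) - harm n" by (rule harmB)
  finally show "(\<Sum>k = 1..int n. p n k) = harm (2 * n) - harm n" .
qed

end
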